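(* The para-octonionic projective plane $\mathbb O'P^2$ (with the metric below) is not locally isotropic: there exist a point $P$ and nonzero tangent vectors $v,w\in T_P\mathbb O'P^2$ with $g(v,v)=g(w,w)$ such that no local isometry fixing $P$ has differential taking $v$ to $w$.
   Context: Para-octonions $\mathbb O'=\mathbb H\oplus\mathbb H$ with product $(q_1,q_2)(p_1,p_2)=(q_1p_1+\bar p_2q_2,\ p_2q_1+q_2\bar p_1)$, conjugation $\overline{(q_1,q_2)}=(\bar q_1,-q_2)$, $\langle a,b\rangle=\mathrm{Re}(a\bar b)$, $|a|^2=\langle a,a\rangle$. $\mathbb O'P^2=\mathcal U/_\sim$ where $\mathcal U=\{(1,y,z):1+|y|^2+|z|^2>0\}\cup\{(x,1,z):|x|^2+1+|z|^2>0\}\cup\{(x,y,1):|x|^2+|y|^2+1>0\}\subset\mathbb O'^3$ and $[a,b,c]\sim[d,e,f]$ iff $(a,b,c)=(d\lambda,e\lambda,f\lambda)$ for some $\lambda$ with $|\lambda|^2>0$; charts $[1,u,v]\mapsto(u,v)$, $[u,1,v]\mapsto(u,v)$, $[u,v,1]\mapsto(u,v)$; metric of signature $(8,8)$ on each chart, for tangent vector $(du,dv)=(\xi,\eta)$: $ds^2=\frac{|\xi|^2(1+|v|^2)+|\eta|^2(1+|u|^2)-2\mathrm{Re}[(u\bar v)(\eta\bar\xi)]}{(1+|u|^2+|v|^2)^2}$. A semi-Riemannian manifold is locally isotropic if for every point $P$ and any two nonzero $v,w\in T_PM$ with $g(v,v)=g(w,w)$ there is a local isometry fixing $P$ whose differential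 at $P$ maps $v$ to $w$. *)

theory Defs
  imports "HOL-Analysis.Analysis"
begin

type_synonym quat = "real \<times> real \<times> real \<times> real"
type_synonym poct = "quat \<times> quat"

text \<open>Hamilton product of quaternions a + b i + c j + d k.\<close>
fun qmul :: "quat \<Rightarrow> quat \<Rightarrow> quat" where
  "qmul (a1, b1, c1, d1) (a2, b2, c2, d2) =
     (a1*a2 - b1*b2 - c1*c2 - d1*d2,
      a1*b2 + b1*a2 + c1*d2 - d1*c2,
      a1*c2 - b1*d2 + c1*a2 + d1*b2,
      a1*d2 + b1*c2 - c1*b2 + d1*a2)"

fun qconj :: "quat \<Rightarrow> quat" where
  "qconj (a, b, c, d) = (a, -b, -c, -d)"

fun pmul :: "poct \<Rightarrow> poct \<Rightarrow> poct" where
  "pmul (q1, q2) (p1, p2) = (qmul q1 p1 + qmul (qconj p2) q2, qmul p2 q1 + qmul q2 (qconj p1))"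

fun pconj :: "poct \<Rightarrow> poct" where
  "pconj (q1, q2) = (qconj q1, - q2)"

definition pRe :: "poct \<Rightarrow> real" where
  "pRe a = fst (fst a)"

definition pinner :: "poct \<Rightarrow> poct \<Rightarrow> real" where
  "pinner a b = pRe (pmul a (pconj b))"

definition psq :: "poct \<Rightarrow> real" where
  "psq a = pinner a a"

text \<open>Image of the chart [1,u,v] \<mapsto> (u,v): points (u,v) with 1+|u|^2+|v|^2 > 0.\<close>
definition chart_dom :: "(poct \<times> poct) set" where
  "chart_dom = {(u, v). 0 < 1 + psq u + psq v}"

text \<open>ds^2 at the point (u,v) evaluated on the tangent vector (xi,eta).\<close>
fun metric_q :: "poct \<times> poct \<Rightarrow> poct \<times> poct \<Rightarrow> real" where
  "metric_q (u, v) (\<xi>, \<eta>) =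
     (psq \<xi> * (1 + psq v) + psq \<eta> * (1 + psq u)
      - 2 * pRe (pmul (pmul u (pconj v)) (pmul \<eta> (pconj \<xi>))))
     / (1 + psq u + psq v)^2"

definition metric_g :: "poct \<times> poct \<Rightarrow> poct \<times> poct \<Rightarrow> poct \<times> poct \<Rightarrow> real" where
  "metric_g p a b = (metric_q p (a + b) - metric_q p (a - b)) / 4"

definition dirderiv :: "('a::real_normed_vector \<Rightarrow> 'b::real_normed_vector) \<Rightarrow> 'a \<Rightarrow> 'a \<Rightarrow> 'b" where
  "dirderiv f x h = vector_derivative (\<lambda>t. f (x + t *\<^sub>R h)) (at 0)"

fun iter_dd :: "('a::real_normed_vector \<Rightarrow> 'b::real_normed_vector) \<Rightarrow> 'a list \<Rightarrow> 'a \<Rightarrow> 'b" where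
  "iter_dd f [] = f"
| "iter_dd f (h # hs) = (\<lambda>x. dirderiv (iter_dd f hs) x h)"

text \<open>f is smooth on the open set S: all iterated directional derivatives exist and are
  continuous on S (in finite dimensions this is exactly C^infinity).\<close>
definition smooth_on :: "'a::euclidean_space set \<Rightarrow> ('a \<Rightarrow> 'b::real_normed_vector) \<Rightarrow> bool" where
  "smooth_on S f \<longleftrightarrow> open S \<and>
     (\<forall>hs. continuous_on S (iter_dd f hs) \<and>
        (\<forall>x\<in>S. \<forall>h. (\<lambda>t. iter_dd f hs (x + t *\<^sub>R h)) differentiable (at 0)))"

definition local_isometry_fixing ::
  "(poct \<times> poct) set \<Rightarrow> (poct \<times> poct \<Rightarrow> poct \<times> poct) \<Rightarrow> poct \<times> poct \<Rightarrow> bool" where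
  "local_isometry_fixing S f P \<longleftrightarrow>
     open S \<and> P \<in> S \<and> S \<subseteq> chart_dom \<and> f ` S \<subseteq> chart_dom \<and>
     inj_on f S \<and> open (f ` S) \<and> smooth_on S f \<and> smooth_on (f ` S) (inv_into S f) \<and>
     f P = P \<and>
     (\<forall>x\<in>S. \<forall>a b. metric_g (f x) (frechet_derivative f (at x) a) (frechet_derivative f (at x) b)
                    = metric_g x a b)"

end

theory Submission
  imports Defs
begin


lemma mvt_helper:
  fixes \<phi> :: "real \<Rightarrow> 'a::real_normed_vector"
  assumes der: "\<And>u. u \<in> closed_segment 0 s \<Longrightarrow> (\<phi> has_vector_derivative \<phi>' u) (at u)"
    and bnd: "\<And>u. u \<in> closed_segment 0 s \<Longrightarrow> norm (\<phi>' u - c) \<le> e"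
  shows "norm (\<phi> s - \<phi> 0 - s *\<^sub>R c) \<le> \<bar>s\<bar> * e"
proof -
  let ?\<psi> = "\<lambda>u. \<phi> u - u *\<^sub>R c"
  have d: "(?\<psi> has_derivative (\<lambda>d. d *\<^sub>R (\<phi>' u - c))) (at u within closed_segment 0 s)"
    if "u \<in> closed_segment 0 s" for u
  proof -
    have "(?\<psi> has_vector_derivative (\<phi>' u - c)) (at u)"
      using der[OF that] by (auto intro!: derivative_eq_intros)
    then show ?thesis unfolding has_vector_derivative_def
      by (rule has_derivative_at_withinI)
  qed
  have o: "onorm (\<lambda>d. d *\<^sub>R (\<phi>' u - c)) \<le> e" if "u \<in> closed_segment 0 s" for u
    using onorm_scaleR_left[OF bounded_linear_ident, of "\<phi>' u - c"] bnd[OF that]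
    by (simp add: onorm_id_le) (metis id_apply onorm_id mult_1 eq_id_iff)
  have "norm (?\<psi> s - ?\<psi> 0) \<le> e * norm (s - 0)"
    by (rule differentiable_bound[OF convex_closed_segment d o]) auto
  then show ?thesis by (simp add: algebra_simps)
qed

lemma dd_line:
  fixes g :: "'a::real_normed_vector \<Rightarrow> 'b::real_normed_vector"
  assumes "(\<lambda>s. g (x0 + t0 *\<^sub>R h + s *\<^sub>R h)) differentiable (at 0)"
  shows "((\<lambda>t. g (x0 + t *\<^sub>R h)) has_vector_derivative dirderiv g (x0 + t0 *\<^sub>R h) h) (at t0)"
proof -
  let ?z = "x0 + t0 *\<^sub>R h"
  have 1: "((\<lambda>s. g (?z + s *\<^sub>R h)) has_vector_derivative dirderiv g ?z h) (at 0)"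
    using assms unfolding dirderiv_def vector_derivative_works by simp
  have 2: "((\<lambda>t. t - t0) has_vector_derivative 1) (at t0)"
    by (auto intro!: derivative_eq_intros)
  have "(((\<lambda>s. g (?z + s *\<^sub>R h)) \<circ> (\<lambda>t. t - t0)) has_vector_derivative 1 *\<^sub>R dirderiv g ?z h) (at t0)"
    by (rule vector_diff_chain_at[OF 2]) (use 1 in simp)
  moreover have "((\<lambda>s. g (?z + s *\<^sub>R h)) \<circ> (\<lambda>t. t - t0)) = (\<lambda>t. g (x0 + t *\<^sub>R h))"
    by (rule ext) (simp add: algebra_simps)
  ultimately show ?thesis by simp
qed

lemma cont_ball:
  assumes "open S" "z \<in> S" "continuous_on S F" "e > 0"
  shows "\<exists>d>0. \<forall>y. dist y z < d \<longrightarrow> y \<in> S \<and> dist (F y) (F z) < e"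
proof -
  obtain d1 where d1: "d1 > 0" "ball z d1 \<subseteq> S" using assms(1,2) open_contains_ball by blast
  have "isCont F z" using assms(1-3) continuous_on_eq_continuous_at by blast
  then obtain d2 where d2: "d2 > 0" "\<forall>y. dist y z < d2 \<longrightarrow> dist (F y) (F z) < e"
    using assms(4) unfolding continuous_at_eps_delta by blast
  show ?thesis
    by (rule exI[of _ "min d1 d2"]) (use d1 d2 in \<open>auto simp: dist_commute subset_iff\<close>)
qed

lemma seg_abs_le:
  fixes s y :: real
  assumes "s \<in> closed_segment 0 y"
  shows "\<bar>s\<bar> \<le> \<bar>y\<bar>"
  using assms by (auto simp: closed_segment_eq_real_ivl split: if_splits)

lemma dd_add:
  fixes g :: "'a::real_normed_vector \<Rightarrow> 'b::real_normed_vector"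
  assumes S: "open S" "z \<in> S"
    and diff: "\<And>y h. y \<in> S \<Longrightarrow> (\<lambda>t. g (y + t *\<^sub>R h)) differentiable (at 0)"
    and cont: "continuous_on S (\<lambda>y. dirderiv g y k)"
  shows "dirderiv g z (h + k) = dirderiv g z h + dirderiv g z k"
proof -
  let ?L = "\<lambda>y v. dirderiv g y v"
  have "((\<lambda>t. g (z + t *\<^sub>R (h + k))) has_derivative (\<lambda>t. t *\<^sub>R (?L z h + ?L z k))) (at 0)"
    unfolding has_derivative_at_alt
  proof (intro conjI allI impI)
    show "bounded_linear (\<lambda>t. t *\<^sub>R (?L z h + ?L z k))" by (rule bounded_linear_scaleR_left)
    fix e :: real assume e: "e > 0"
    have "((\<lambda>t. g (z + t *\<^sub>R h)) has_vector_derivative ?L z h) (at 0)"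
      using diff[OF S(2)] unfolding dirderiv_def vector_derivative_works .
    then obtain d1 where d1: "d1 > 0"
      "\<forall>y. norm (y - 0) < d1 \<longrightarrow> norm (g (z + y *\<^sub>R h) - g (z + 0 *\<^sub>R h) - (y - 0) *\<^sub>R ?L z h) \<le> e/2 * norm (y - 0)"
      unfolding has_vector_derivative_def has_derivative_at_alt using e
      by (meson half_gt_zero)
    obtain d2 where d2: "d2 > 0" "\<forall>y. dist y z < d2 \<longrightarrow> y \<in> S \<and> dist (?L y k) (?L z k) < e/2"
      using cont_ball[OF S cont, of "e/2"] e by auto
    define d where "d = min d1 (d2 / (norm h + norm k + 1))"
    have hk: "norm h + norm k + 1 > 0" by (smt (verit) norm_ge_zero)
    then have dpos: "d > 0" using d1 d2 by (simp add: d_def)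
    show "\<exists>d>0. \<forall>y. norm (y - 0) < d \<longrightarrow>
      norm (g (z + y *\<^sub>R (h + k)) - g (z + 0 *\<^sub>R (h + k)) - (y - 0) *\<^sub>R (?L z h + ?L z k)) \<le> e * norm (y - 0)"
    proof (intro exI[of _ d] conjI dpos allI impI)
      fix y :: real assume y: "norm (y - 0) < d"
      have A: "norm (g (z + y *\<^sub>R h) - g z - y *\<^sub>R ?L z h) \<le> e/2 * \<bar>y\<bar>"
        using d1(2) y by (auto simp: d_def)
      have pt: "dist (z + y *\<^sub>R h + s *\<^sub>R k) z < d2" if "s \<in> closed_segment 0 y" for s
      proof -
        have "dist (z + y *\<^sub>R h + s *\<^sub>R k) z = norm (y *\<^sub>R h + s *\<^sub>R k)" by (simp add: dist_norm)
        also have "\<dots> \<le> \<bar>y\<bar> * norm h + \<bar>s\<bar> * norm k" by (rule order_trans[OF norm_triangle_ineq]) simp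
        also have "\<dots> \<le> \<bar>y\<bar> * (norm h + norm k + 1)"
          using seg_abs_le[OF that] mult_right_mono[OF seg_abs_le[OF that] norm_ge_zero[of k]]
          by (simp add: algebra_simps)
        also have "\<dots> < d2"
        proof -
          have "\<bar>y\<bar> < d2 / (norm h + norm k + 1)" using y by (simp add: d_def)
          then show ?thesis using hk by (simp add: pos_less_divide_eq)
        qed
        finally show ?thesis .
      qed
      have B: "norm (g (z + y *\<^sub>R h + y *\<^sub>R k) - g (z + y *\<^sub>R h + 0 *\<^sub>R k) - y *\<^sub>R ?L z k) \<le> \<bar>y\<bar> * (e/2)"
      proof (rule mvt_helper)
        fix s assume s: "s \<in> closed_segment 0 y"
        have inS: "z + y *\<^sub>R h + s *\<^sub>R k \<in> S" using d2(2) pt[OF s] by blast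
        show "((\<lambda>s. g (z + y *\<^sub>R h + s *\<^sub>R k)) has_vector_derivative ?L (z + y *\<^sub>R h + s *\<^sub>R k) k) (at s)"
          by (rule dd_line) (use diff[OF inS] in simp)
        show "norm (?L (z + y *\<^sub>R h + s *\<^sub>R k) k - ?L z k) \<le> e/2"
          using d2(2)[rule_format, OF pt[OF s]] by (simp add: dist_norm)
      qed
      have "norm (g (z + y *\<^sub>R (h + k)) - g (z + 0 *\<^sub>R (h + k)) - (y - 0) *\<^sub>R (?L z h + ?L z k))
          = norm ((g (z + y *\<^sub>R h + y *\<^sub>R k) - g (z + y *\<^sub>R h + 0 *\<^sub>R k) - y *\<^sub>R ?L z k)
                 + (g (z + y *\<^sub>R h) - g z - y *\<^sub>R ?L z h))"
        by (simp add: algebra_simps scaleR_right_distrib)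
      also have "\<dots> \<le> \<bar>y\<bar> * (e/2) + e/2 * \<bar>y\<bar>"
        by (rule order_trans[OF norm_triangle_ineq]) (use A B in \<open>simp add: mult.commute\<close>)
      finally show "norm (g (z + y *\<^sub>R (h + k)) - g (z + 0 *\<^sub>R (h + k)) - (y - 0) *\<^sub>R (?L z h + ?L z k)) \<le> e * norm (y - 0)"
        by simp
    qed
  qed
  then have "((\<lambda>t. g (z + t *\<^sub>R (h + k))) has_vector_derivative (?L z h + ?L z k)) (at 0)"
    by (simp add: has_vector_derivative_def)
  then show ?thesis unfolding dirderiv_def by (rule vector_derivative_at)
qed

lemma dd_scale:
  fixes g :: "'a::real_normed_vector \<Rightarrow> 'b::real_normed_vector"
  assumes "(\<lambda>t. g (z + t *\<^sub>R h)) differentiable (at 0)"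
  shows "dirderiv g z (c *\<^sub>R h) = c *\<^sub>R dirderiv g z h"
proof -
  have 1: "((\<lambda>s. g (z + s *\<^sub>R h)) has_vector_derivative dirderiv g z h) (at (c * 0))"
    using assms unfolding dirderiv_def vector_derivative_works by simp
  have 2: "((\<lambda>t. c * t) has_vector_derivative c) (at 0)"
    by (auto intro!: derivative_eq_intros)
  have "(((\<lambda>s. g (z + s *\<^sub>R h)) \<circ> (\<lambda>t. c * t)) has_vector_derivative c *\<^sub>R dirderiv g z h) (at 0)"
    by (rule vector_diff_chain_at[OF 2 1])
  moreover have "((\<lambda>s. g (z + s *\<^sub>R h)) \<circ> (\<lambda>t. c * t)) = (\<lambda>t. g (z + t *\<^sub>R (c *\<^sub>R h)))"
    by (rule ext) (simp add: algebra_simps)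
  ultimately show ?thesis unfolding dirderiv_def by (simp add: vector_derivative_at)
qed

lemma dd_linear:
  fixes g :: "'a::real_normed_vector \<Rightarrow> 'b::real_normed_vector"
  assumes S: "open S" "z \<in> S"
    and diff: "\<And>y h. y \<in> S \<Longrightarrow> (\<lambda>t. g (y + t *\<^sub>R h)) differentiable (at 0)"
    and cont: "\<And>k. continuous_on S (\<lambda>y. dirderiv g y k)"
  shows "linear (\<lambda>h. dirderiv g z h)"
  by (rule linearI) (use dd_add[OF S diff cont] dd_scale[OF diff[OF S(2)]] in auto)

lemma dd_frechet:
  fixes g :: "'a::euclidean_space \<Rightarrow> 'b::real_normed_vector"
  assumes S: "open S" "x \<in> S"
    and diff: "\<And>y h. y \<in> S \<Longrightarrow> (\<lambda>t. g (y + t *\<^sub>R h)) differentiable (at 0)"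
    and cont: "\<And>k. continuous_on S (\<lambda>y. dirderiv g y k)"
  shows "(g has_derivative (\<lambda>h. dirderiv g x h)) (at x)"
  unfolding has_derivative_at_alt
proof (intro conjI allI impI)
  let ?L = "\<lambda>y v. dirderiv g y v"
  have lin: "linear (?L y)" if "y \<in> S" for y by (rule dd_linear[OF S(1) that diff cont])
  show "bounded_linear (?L x)" using lin[OF S(2)] linear_conv_bounded_linear by blast
  fix e :: real assume e: "e > 0"
  define e' where "e' = e / (real DIM('a))"
  have e': "e' > 0" using e by (simp add: e'_def)
  have "\<forall>\<^sub>F y in nhds x. y \<in> S \<and> (\<forall>b\<in>Basis. dist (?L y b) (?L x b) < e')"
  proof (rule eventually_conj)
    show "\<forall>\<^sub>F y in nhds x. y \<in> S" using S by (rule eventually_nhds_in_open)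
    show "\<forall>\<^sub>F y in nhds x. \<forall>b\<in>Basis. dist (?L y b) (?L x b) < e'"
    proof (rule eventually_ball_finite[OF finite_Basis], intro ballI)
      fix b :: 'a assume "b \<in> Basis"
      have "isCont (\<lambda>y. ?L y b) x" using S cont continuous_on_eq_continuous_at by blast
      then have "((\<lambda>y. ?L y b) \<longlongrightarrow> ?L x b) (nhds x)" using tendsto_at_iff_tendsto_nhds isCont_def by blast
      then show "\<forall>\<^sub>F y in nhds x. dist (?L y b) (?L x b) < e'" using e' by (rule tendstoD)
    qed
  qed
  then obtain d where d: "d > 0" "\<forall>y. dist y x < d \<longrightarrow> y \<in> S \<and> (\<forall>b\<in>Basis. dist (?L y b) (?L x b) < e')"
    unfolding eventually_nhds_metric by blast
  show "\<exists>d>0. \<forall>y. norm (y - x) < d \<longrightarrow> norm (g y - g x - ?L x (y - x)) \<le> e * norm (y - x)"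
  proof (intro exI[of _ d] conjI d(1) allI impI)
    fix y assume y: "norm (y - x) < d"
    let ?v = "y - x"
    have pt: "dist (x + s *\<^sub>R ?v) x < d" if "s \<in> closed_segment 0 1" for s :: real
    proof -
      have "\<bar>s\<bar> \<le> 1" using seg_abs_le[OF that] by simp
      then have "norm (s *\<^sub>R ?v) \<le> norm ?v" by (simp add: mult_left_le_one_le)
      then show ?thesis using y by (simp add: dist_norm)
    qed
    have "norm (g (x + 1 *\<^sub>R ?v) - g (x + 0 *\<^sub>R ?v) - 1 *\<^sub>R ?L x ?v) \<le> \<bar>1\<bar> * (e * norm ?v)"
    proof (rule mvt_helper)
      fix s :: real assume s: "s \<in> closed_segment 0 1"
      have inS: "x + s *\<^sub>R ?v \<in> S" and close: "\<forall>b\<in>Basis. dist (?L (x + s *\<^sub>R ?v) b) (?L x b) < e'"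
        using d(2) pt[OF s] by auto
      show "((\<lambda>s. g (x + s *\<^sub>R ?v)) has_vector_derivative ?L (x + s *\<^sub>R ?v) ?v) (at s)"
        by (rule dd_line) (use diff[OF inS] in simp)
      have rep: "?L p ?v = (\<Sum>b\<in>Basis. (?v \<bullet> b) *\<^sub>R ?L p b)" if "p \<in> S" for p
      proof -
        have "?L p ?v = ?L p (\<Sum>b\<in>Basis. (?v \<bullet> b) *\<^sub>R b)" by (simp add: euclidean_representation)
        also have "\<dots> = (\<Sum>b\<in>Basis. (?v \<bullet> b) *\<^sub>R ?L p b)"
          by (simp add: linear_sum[OF lin[OF that]] linear_scale[OF lin[OF that]])
        finally show ?thesis .
      qed
      have "norm (?L (x + s *\<^sub>R ?v) ?v - ?L x ?v) = norm (\<Sum>b\<in>Basis. (?v \<bullet> b) *\<^sub>R (?L (x + s *\<^sub>R ?v) b - ?L x b))"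
        unfolding rep[OF inS] rep[OF S(2)] by (simp only: sum_subtractf scaleR_diff_right)
      also have "\<dots> \<le> (\<Sum>b\<in>Basis. norm ((?v \<bullet> b) *\<^sub>R (?L (x + s *\<^sub>R ?v) b - ?L x b)))"
        by (rule norm_sum)
      also have "\<dots> \<le> (\<Sum>b\<in>(Basis::'a set). norm ?v * e')"
      proof (rule sum_mono)
        fix b :: 'a assume b: "b \<in> Basis"
        have "norm ((?v \<bullet> b) *\<^sub>R (?L (x + s *\<^sub>R ?v) b - ?L x b)) = \<bar>?v \<bullet> b\<bar> * norm (?L (x + s *\<^sub>R ?v) b - ?L x b)"
          by simp
        also have "\<dots> \<le> norm ?v * e'"
          using close b Basis_le_norm[OF b, of ?v]
          by (intro mult_mono) (auto simp: dist_norm less_imp_le)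
        finally show "norm ((?v \<bullet> b) *\<^sub>R (?L (x + s *\<^sub>R ?v) b - ?L x b)) \<le> norm ?v * e'" .
      qed
      also have "\<dots> = e * norm ?v" by (simp add: e'_def)
      finally show "norm (?L (x + s *\<^sub>R ?v) ?v - ?L x ?v) \<le> e * norm ?v" .
    qed
    then show "norm (g y - g x - ?L x (y - x)) \<le> e * norm (y - x)" by simp
  qed
qed

lemma schwarz_bound:
  fixes g :: "'a::real_normed_vector \<Rightarrow> 'b::real_normed_vector"
  assumes S: "open S" "x \<in> S"
    and diff: "\<And>y h. y \<in> S \<Longrightarrow> (\<lambda>t. g (y + t *\<^sub>R h)) differentiable (at 0)"
    and diff1: "\<And>y. y \<in> S \<Longrightarrow> (\<lambda>t. dirderiv g (y + t *\<^sub>R k) h) differentiable (at 0)"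
    and cont: "continuous_on S (\<lambda>y. dirderiv (\<lambda>z. dirderiv g z h) y k)"
    and e: "e > 0"
  shows "\<exists>d>0. \<forall>s. \<bar>s\<bar> < d \<longrightarrow>
    norm (g (x + s *\<^sub>R h + s *\<^sub>R k) - g (x + s *\<^sub>R h) - g (x + s *\<^sub>R k) + g x
          - (s * s) *\<^sub>R dirderiv (\<lambda>z. dirderiv g z h) x k) \<le> s * s * e"
proof -
  let ?M = "dirderiv (\<lambda>z. dirderiv g z h) x k"
  let ?G = "\<lambda>z. dirderiv g z h"
  obtain d2 where d2: "d2 > 0" "\<forall>y. dist y x < d2 \<longrightarrow> y \<in> S \<and> dist (dirderiv ?G y k) ?M < e"
    using cont_ball[OF S cont e] by auto
  have hk: "norm h + norm k + 1 > 0" by (smt (verit) norm_ge_zero)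
  define d where "d = d2 / (norm h + norm k + 1)"
  have dpos: "d > 0" using d2 hk by (simp add: d_def)
  show ?thesis
  proof (intro exI[of _ d] conjI dpos allI impI)
    fix s :: real assume s: "\<bar>s\<bar> < d"
    have near: "dist (x + u *\<^sub>R h + r *\<^sub>R k) x < d2" if "\<bar>u\<bar> \<le> \<bar>s\<bar>" "\<bar>r\<bar> \<le> \<bar>s\<bar>" for u r
    proof -
      have "dist (x + u *\<^sub>R h + r *\<^sub>R k) x = norm (u *\<^sub>R h + r *\<^sub>R k)" by (simp add: dist_norm)
      also have "\<dots> \<le> \<bar>u\<bar> * norm h + \<bar>r\<bar> * norm k" by (rule order_trans[OF norm_triangle_ineq]) simp
      also have "\<dots> \<le> \<bar>s\<bar> * (norm h + norm k + 1)"
        using mult_right_mono[OF that(1) norm_ge_zero[of h]] mult_right_mono[OF that(2) norm_ge_zero[of k]]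
        by (simp add: algebra_simps)
      also have "\<dots> < d2"
      proof -
        have "\<bar>s\<bar> < d2 / (norm h + norm k + 1)" using s by (simp add: d_def)
        then show ?thesis using hk by (simp add: pos_less_divide_eq)
      qed
      finally show ?thesis .
    qed
    have inS: "x + u *\<^sub>R h + r *\<^sub>R k \<in> S" if "\<bar>u\<bar> \<le> \<bar>s\<bar>" "\<bar>r\<bar> \<le> \<bar>s\<bar>" for u r
      using d2(2) near[OF that] by blast
    let ?\<psi> = "\<lambda>u. g ((x + s *\<^sub>R k) + u *\<^sub>R h) - g (x + u *\<^sub>R h)"
    let ?\<psi>' = "\<lambda>u. dirderiv g ((x + s *\<^sub>R k) + u *\<^sub>R h) h - dirderiv g (x + u *\<^sub>R h) h"
    have "norm (?\<psi> s - ?\<psi> 0 - s *\<^sub>R (s *\<^sub>R ?M)) \<le> \<bar>s\<bar> * (\<bar>s\<bar> * e)"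
    proof (rule mvt_helper)
      fix u assume u: "u \<in> closed_segment 0 s"
      have us: "\<bar>u\<bar> \<le> \<bar>s\<bar>" by (rule seg_abs_le[OF u])
      have in1: "x + s *\<^sub>R k + u *\<^sub>R h \<in> S" using inS[OF us order_refl] by (simp add: algebra_simps)
      have in2: "x + u *\<^sub>R h \<in> S" using inS[OF us, of 0] by simp
      show "(?\<psi> has_vector_derivative ?\<psi>' u) (at u)"
        by (intro derivative_intros dd_line) (use diff[OF in1] diff[OF in2] in simp_all)
      have "norm (?G (x + u *\<^sub>R h + s *\<^sub>R k) - ?G (x + u *\<^sub>R h + 0 *\<^sub>R k) - s *\<^sub>R ?M) \<le> \<bar>s\<bar> * e"
      proof (rule mvt_helper)
        fix r assume r: "r \<in> closed_segment 0 s"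
        have rs: "\<bar>r\<bar> \<le> \<bar>s\<bar>" by (rule seg_abs_le[OF r])
        show "((\<lambda>r. ?G (x + u *\<^sub>R h + r *\<^sub>R k)) has_vector_derivative dirderiv ?G (x + u *\<^sub>R h + r *\<^sub>R k) k) (at r)"
          by (rule dd_line) (use diff1[OF inS[OF us rs]] in simp)
        show "norm (dirderiv ?G (x + u *\<^sub>R h + r *\<^sub>R k) k - ?M) \<le> e"
          using d2(2)[rule_format, OF near[OF us rs]] by (simp add: dist_norm)
      qed
      moreover have "x + u *\<^sub>R h + s *\<^sub>R k = x + s *\<^sub>R k + u *\<^sub>R h" by (simp add: algebra_simps)
      ultimately show "norm (?\<psi>' u - s *\<^sub>R ?M) \<le> \<bar>s\<bar> * e" by simp
    qed
    moreover have "?\<psi> s - ?\<psi> 0 - s *\<^sub>R (s *\<^sub>R ?M) =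
      g (x + s *\<^sub>R h + s *\<^sub>R k) - g (x + s *\<^sub>R h) - g (x + s *\<^sub>R k) + g x - (s * s) *\<^sub>R ?M"
    proof -
      have "x + s *\<^sub>R k + s *\<^sub>R h = x + s *\<^sub>R h + s *\<^sub>R k" by (simp add: algebra_simps)
      then show ?thesis by (simp add: algebra_simps)
    qed
    moreover have "\<bar>s\<bar> * (\<bar>s\<bar> * e) = s * s * e" by (metis abs_mult_self_eq mult.assoc)
    ultimately show "norm (g (x + s *\<^sub>R h + s *\<^sub>R k) - g (x + s *\<^sub>R h) - g (x + s *\<^sub>R k) + g x
          - (s * s) *\<^sub>R ?M) \<le> s * s * e"
      by metis
  qed
qed

lemma schwarz:
  fixes g :: "'a::real_normed_vector \<Rightarrow> 'b::real_normed_vector"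
  assumes S: "open S" "x \<in> S"
    and diff: "\<And>y h. y \<in> S \<Longrightarrow> (\<lambda>t. g (y + t *\<^sub>R h)) differentiable (at 0)"
    and diff1: "\<And>y. y \<in> S \<Longrightarrow> (\<lambda>t. dirderiv g (y + t *\<^sub>R k) h) differentiable (at 0)"
    and diff2: "\<And>y. y \<in> S \<Longrightarrow> (\<lambda>t. dirderiv g (y + t *\<^sub>R h) k) differentiable (at 0)"
    and cont1: "continuous_on S (\<lambda>y. dirderiv (\<lambda>z. dirderiv g z h) y k)"
    and cont2: "continuous_on S (\<lambda>y. dirderiv (\<lambda>z. dirderiv g z k) y h)"
  shows "dirderiv (\<lambda>z. dirderiv g z h) x k = dirderiv (\<lambda>z. dirderiv g z k) x h"
proof -
  let ?M1 = "dirderiv (\<lambda>z. dirderiv g z h) x k"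
  let ?M2 = "dirderiv (\<lambda>z. dirderiv g z k) x h"
  have *: "norm (?M1 - ?M2) \<le> 2 * e" if e: "e > 0" for e
  proof -
    obtain d1 where d1: "d1 > 0" "\<forall>s. \<bar>s\<bar> < d1 \<longrightarrow>
      norm (g (x + s *\<^sub>R h + s *\<^sub>R k) - g (x + s *\<^sub>R h) - g (x + s *\<^sub>R k) + g x - (s * s) *\<^sub>R ?M1) \<le> s * s * e"
      using schwarz_bound[OF S diff diff1 cont1 e] by blast
    obtain d2 where d2: "d2 > 0" "\<forall>s. \<bar>s\<bar> < d2 \<longrightarrow>
      norm (g (x + s *\<^sub>R k + s *\<^sub>R h) - g (x + s *\<^sub>R k) - g (x + s *\<^sub>R h) + g x - (s * s) *\<^sub>R ?M2) \<le> s * s * e"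
      using schwarz_bound[OF S diff diff2 cont2 e] by blast
    define s where "s = min d1 d2 / 2"
    have sp: "s > 0" "\<bar>s\<bar> < d1" "\<bar>s\<bar> < d2" using d1 d2 by (auto simp: s_def)
    let ?A = "g (x + s *\<^sub>R h + s *\<^sub>R k) - g (x + s *\<^sub>R h) - g (x + s *\<^sub>R k) + g x"
    have A1: "norm (?A - (s * s) *\<^sub>R ?M1) \<le> s * s * e" using d1(2) sp by blast
    have A2': "norm (g (x + s *\<^sub>R k + s *\<^sub>R h) - g (x + s *\<^sub>R k) - g (x + s *\<^sub>R h) + g x - (s * s) *\<^sub>R ?M2) \<le> s * s * e"
      using d2(2) sp by blast
    have pt: "x + s *\<^sub>R k + s *\<^sub>R h = x + s *\<^sub>R h + s *\<^sub>R k" by (simp add: algebra_simps)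
    have Eq: "g (x + s *\<^sub>R k + s *\<^sub>R h) - g (x + s *\<^sub>R k) - g (x + s *\<^sub>R h) + g x = ?A"
      unfolding pt by (simp add: algebra_simps)
    have A2: "norm (?A - (s * s) *\<^sub>R ?M2) \<le> s * s * e" using A2'[unfolded Eq] .
    have "(s * s) * norm (?M1 - ?M2) = norm ((?A - (s * s) *\<^sub>R ?M2) - (?A - (s * s) *\<^sub>R ?M1))"
      by (simp add: algebra_simps flip: scaleR_diff_right)
    also have "\<dots> \<le> s * s * e + s * s * e"
      by (rule order_trans[OF norm_triangle_ineq4]) (use A1 A2 in linarith)
    finally have "(s * s) * norm (?M1 - ?M2) \<le> (s * s) * (2 * e)" by (simp add: algebra_simps)
    then show ?thesis using sp by (simp add: mult_le_cancel_left_pos)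
  qed
  have "norm (?M1 - ?M2) \<le> 0"
  proof (rule field_le_epsilon)
    fix e :: real assume "e > 0"
    then have "norm (?M1 - ?M2) \<le> 2 * (e / 2)" by (intro *) simp
    then show "norm (?M1 - ?M2) \<le> 0 + e" by simp
  qed
  then show ?thesis by simp
qed




lemma qmul_alt: "qmul p q =
  (fst p * fst q - fst (snd p) * fst (snd q) - fst (snd (snd p)) * fst (snd (snd q)) - snd (snd (snd p)) * snd (snd (snd q)),
   fst p * fst (snd q) + fst (snd p) * fst q + fst (snd (snd p)) * snd (snd (snd q)) - snd (snd (snd p)) * fst (snd (snd q)),
   fst p * fst (snd (snd q)) - fst (snd p) * snd (snd (snd q)) + fst (snd (snd p)) * fst q + snd (snd (snd p)) * fst (snd q),
   fst p * snd (snd (snd q)) + fst (snd p) * fst (snd (snd q)) - fst (snd (snd p)) * fst (snd q) + snd (snd (snd p)) * fst q)"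
  by (metis qmul.simps prod.collapse)
lemma qconj_alt: "qconj p = (fst p, - fst (snd p), - fst (snd (snd p)), - snd (snd (snd p)))"
  by (metis qconj.simps prod.collapse)
lemma pmul_alt: "pmul a c = (qmul (fst a) (fst c) + qmul (qconj (snd c)) (snd a), qmul (snd c) (fst a) + qmul (snd a) (qconj (fst c)))"
  by (metis pmul.simps prod.collapse)
lemma pconj_alt: "pconj a = (qconj (fst a), - snd a)"
  by (metis pconj.simps prod.collapse)

lemma qmul_add1: "qmul (a + b) c = qmul a c + qmul b c"
  by (simp add: qmul_alt algebra_simps)
lemma qmul_add2: "qmul c (a + b) = qmul c a + qmul c b"
  by (simp add: qmul_alt algebra_simps)
lemma qmul_scale1: "qmul (r *\<^sub>R a) c = r *\<^sub>R qmul a c"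
  by (simp add: qmul_alt algebra_simps)
lemma qmul_scale2: "qmul c (r *\<^sub>R a) = r *\<^sub>R qmul c a"
  by (simp add: qmul_alt algebra_simps)
lemma qconj_add: "qconj (a + b) = qconj a + qconj b"
  by (simp add: qconj_alt)
lemma qconj_scale: "qconj (r *\<^sub>R a) = r *\<^sub>R qconj a"
  by (simp add: qconj_alt)

lemma pmul_add1: "pmul (a + b) c = pmul a c + pmul b c"
  unfolding pmul_alt by (simp only: fst_add snd_add qmul_add1 qmul_add2 qconj_add add_Pair) (simp add: algebra_simps)
lemma pmul_add2: "pmul c (a + b) = pmul c a + pmul c b"
  unfolding pmul_alt by (simp only: fst_add snd_add qmul_add1 qmul_add2 qconj_add add_Pair) (simp add: algebra_simps)
lemma pmul_scale1: "pmul (r *\<^sub>R a) c = r *\<^sub>R pmul a c"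
  unfolding pmul_alt by (simp only: fst_scaleR snd_scaleR qmul_scale1 qmul_scale2 qconj_scale scaleR_right_distrib scaleR_Pair)
lemma pmul_scale2: "pmul c (r *\<^sub>R a) = r *\<^sub>R pmul c a"
  unfolding pmul_alt by (simp only: fst_scaleR snd_scaleR qmul_scale1 qmul_scale2 qconj_scale scaleR_right_distrib scaleR_Pair)
lemma pconj_add: "pconj (a + b) = pconj a + pconj b"
  by (simp add: pconj_alt qconj_add)
lemma pconj_scale: "pconj (r *\<^sub>R a) = r *\<^sub>R pconj a"
  by (simp add: pconj_alt qconj_scale)
lemma pRe_add: "pRe (a + b) = pRe a + pRe b"
  by (simp add: pRe_def)
lemma pRe_scale: "pRe (r *\<^sub>R a) = r * pRe a"
  by (simp add: pRe_def)

lemma bl_pmul: "bounded_bilinear pmul"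
proof -
  have "bilinear pmul"
    unfolding bilinear_def
    by (intro conjI allI linearI) (simp_all only: pmul_add1 pmul_add2 pmul_scale1 pmul_scale2)
  then show ?thesis by (simp add: bilinear_conv_bounded_bilinear)
qed
lemma bl_pconj: "bounded_linear pconj"
  by (simp add: linear_conv_bounded_linear[symmetric] linearI pconj_add pconj_scale)
lemma bl_pRe: "bounded_linear pRe"
  by (simp add: linear_conv_bounded_linear[symmetric] linearI pRe_add pRe_scale)

definition M4 :: "poct \<Rightarrow> poct \<Rightarrow> poct \<Rightarrow> poct \<Rightarrow> real" where
  "M4 u v e x = pRe (pmul (pmul u (pconj v)) (pmul e (pconj x)))"

lemma M4_add1: "M4 (a + b) v e x = M4 a v e x + M4 b v e x"
  by (simp add: M4_def pmul_add1 pRe_add)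
lemma M4_diff1: "M4 (a - b) v e x = M4 a v e x - M4 b v e x"
  by (simp add: M4_def bounded_bilinear.diff_left[OF bl_pmul] linear_diff[OF bounded_linear.linear[OF bl_pRe]])
lemma M4_add4: "M4 u v e (a + b) = M4 u v e a + M4 u v e b"
  by (simp add: M4_def pmul_add2 pconj_add pRe_add)
lemma M4_diff4: "M4 u v e (a - b) = M4 u v e a - M4 u v e b"
  by (simp add: M4_def bounded_bilinear.diff_right[OF bl_pmul] linear_diff[OF bounded_linear.linear[OF bl_pRe]]
     linear_diff[OF bounded_linear.linear[OF bl_pconj]])
lemma M4_zero3: "M4 u v 0 x = 0"
  by (simp add: M4_def bounded_bilinear.zero_left[OF bl_pmul] bounded_bilinear.zero_right[OF bl_pmul]
     linear_0[OF bounded_linear.linear[OF bl_pRe]])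
lemma M4_zero2: "M4 u 0 e x = 0"
  by (simp add: M4_def bounded_bilinear.zero_left[OF bl_pmul] bounded_bilinear.zero_right[OF bl_pmul]
     linear_0[OF bounded_linear.linear[OF bl_pRe]] linear_0[OF bounded_linear.linear[OF bl_pconj]])

definition P2 :: "poct \<times> poct \<Rightarrow> poct \<times> poct \<Rightarrow> real" where
  "P2 y X = psq (fst X) * psq (snd y) + psq (snd X) * psq (fst y) - 2 * M4 (fst y) (snd y) (snd X) (fst X)"

definition Kc :: "poct \<times> poct \<Rightarrow> poct \<times> poct \<Rightarrow> real" where
  "Kc y w = P2 y w + P2 w y - (P2 (y+w) (y+w) - P2 (y+w) (y-w) - P2 (y-w) (y+w) + P2 (y-w) (y-w)) / 8"

lemma psq_zero: "psq 0 = 0"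
  by (simp add: psq_def pinner_def M4_def bounded_bilinear.zero_left[OF bl_pmul] linear_0[OF bounded_linear.linear[OF bl_pRe]])

lemma Kc_w0: "Kc y (u, 0) = 2 * psq u * psq (snd y) + M4 u (snd y) (snd y) u"
  by (simp add: Kc_def P2_def M4_add1 M4_diff1 M4_add4 M4_diff4 M4_zero3 M4_zero2 psq_zero algebra_simps)

definition uu :: poct where "uu = ((1,0,0,0),(1,0,0,0))"

lemma M4_uu: "M4 uu z z uu = 0"
proof -
  obtain a b c d e f g h where z: "z = ((a,b,c,d),(e,f,g,h))" by (metis prod.exhaust)
  show ?thesis unfolding z by (simp add: M4_def uu_def pRe_def algebra_simps)
qed

lemma psq_uu: "psq uu = 0"
  by (simp add: psq_def pinner_def uu_def pRe_def)

definition wv :: "poct \<times> poct" where "wv = (uu, 0)"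
definition vv :: "poct \<times> poct" where "vv = (((1,0,0,0),(0,0,0,0)),((0,0,0,0),(1,0,0,0)))"
definition xx :: "poct \<times> poct" where "xx = (((0,1,0,0),(0,0,0,0)),((0,0,0,0),(0,0,0,0)))"

lemma Kc_x_v: "Kc xx vv = -3"
  by (simp add: Kc_def P2_def M4_def psq_def pinner_def pRe_def xx_def vv_def zero_prod_def)

lemma Kc_w: "Kc y wv = 0"
  by (simp add: wv_def Kc_w0 M4_uu psq_uu)




definition jet2 :: "(real \<Rightarrow> 'a::real_normed_vector) \<Rightarrow> 'a \<Rightarrow> 'a \<Rightarrow> 'a \<Rightarrow> bool" where
  "jet2 \<phi> c0 c1 c2 \<longleftrightarrow> (\<exists>d>0. \<exists>\<phi>'. (\<forall>t. \<bar>t\<bar> < d \<longrightarrow> (\<phi> has_vector_derivative \<phi>' t) (at t)) \<and>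
      \<phi> 0 = c0 \<and> \<phi>' 0 = c1 \<and> (\<phi>' has_vector_derivative c2) (at 0))"

lemma jet_eq: "jet2 \<phi> a b c \<Longrightarrow> a = a' \<Longrightarrow> b = b' \<Longrightarrow> c = c' \<Longrightarrow> jet2 \<phi> a' b' c'"
  by simp

lemma jet_const: "jet2 (\<lambda>t. c) c 0 0"
  unfolding jet2_def
  by (rule exI[of _ 1]) (auto intro!: exI[of _ "\<lambda>t. 0"] derivative_eq_intros)

lemma jet_id: "jet2 (\<lambda>t. t) 0 1 0"
  unfolding jet2_def
  by (rule exI[of _ 1]) (auto intro!: exI[of _ "\<lambda>t. 1"] derivative_eq_intros)

lemma jet_bil:
  fixes prod :: "'a::real_normed_vector \<Rightarrow> 'b::real_normed_vector \<Rightarrow> 'c::real_normed_vector"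
    and \<phi> :: "real \<Rightarrow> 'a" and \<psi> :: "real \<Rightarrow> 'b"
  assumes bb: "bounded_bilinear prod"
    and J1: "jet2 \<phi> a0 a1 a2" and J2: "jet2 \<psi> b0 b1 b2"
  shows "jet2 (\<lambda>t. prod (\<phi> t) (\<psi> t)) (prod a0 b0) (prod a1 b0 + prod a0 b1)
           (prod a2 b0 + 2 *\<^sub>R prod a1 b1 + prod a0 b2)"
proof -
  interpret bounded_bilinear prod by (rule bb)
  obtain d1 \<phi>' where 1: "d1 > 0" "\<forall>t. \<bar>t\<bar> < d1 \<longrightarrow> (\<phi> has_vector_derivative \<phi>' t) (at t)"
    "\<phi> 0 = a0" "\<phi>' 0 = a1" "(\<phi>' has_vector_derivative a2) (at 0)"
    using J1 unfolding jet2_def by blast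
  obtain d2 \<psi>' where 2: "d2 > 0" "\<forall>t. \<bar>t\<bar> < d2 \<longrightarrow> (\<psi> has_vector_derivative \<psi>' t) (at t)"
    "\<psi> 0 = b0" "\<psi>' 0 = b1" "(\<psi>' has_vector_derivative b2) (at 0)"
    using J2 unfolding jet2_def by blast
  let ?\<chi> = "\<lambda>t. prod (\<phi> t) (\<psi>' t) + prod (\<phi>' t) (\<psi> t)"
  have D: "((\<lambda>t. prod (\<phi> t) (\<psi> t)) has_vector_derivative ?\<chi> t) (at t)" if "\<bar>t\<bar> < min d1 d2" for t
    using has_vector_derivative[of \<phi> "\<phi>' t" t UNIV \<psi> "\<psi>' t"] 1(2) 2(2) that by auto
  have p0: "(\<phi> has_vector_derivative a1) (at 0)" using 1 by force
  have q0: "(\<psi> has_vector_derivative b1) (at 0)" using 2 by force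
  have "(?\<chi> has_vector_derivative (prod (\<phi> 0) b2 + prod a1 (\<psi>' 0)) + (prod (\<phi>' 0) b1 + prod a2 (\<psi> 0))) (at 0)"
    by (intro derivative_intros has_vector_derivative[OF p0 2(5)] has_vector_derivative[OF 1(5) q0])
  then have D2: "(?\<chi> has_vector_derivative (prod a2 b0 + 2 *\<^sub>R prod a1 b1 + prod a0 b2)) (at 0)"
    using 1 2 by (simp add: scaleR_2 algebra_simps)
  show ?thesis unfolding jet2_def
    by (rule exI[of _ "min d1 d2"], rule conjI, use 1 2 in simp, rule exI[of _ ?\<chi>])
      (use D D2 1 2 in auto)
qed

lemma jet_lin:
  fixes L :: "'a::real_normed_vector \<Rightarrow> 'b::real_normed_vector"
  assumes "bounded_linear L" "jet2 \<phi> a b c"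
  shows "jet2 (\<lambda>t. L (\<phi> t)) (L a) (L b) (L c)"
proof -
  obtain d \<phi>' where 1: "d > 0" "\<forall>t. \<bar>t\<bar> < d \<longrightarrow> (\<phi> has_vector_derivative \<phi>' t) (at t)"
    "\<phi> 0 = a" "\<phi>' 0 = b" "(\<phi>' has_vector_derivative c) (at 0)"
    using assms(2) unfolding jet2_def by blast
  show ?thesis unfolding jet2_def
    by (rule exI[of _ d], rule conjI, use 1 in simp, rule exI[of _ "\<lambda>t. L (\<phi>' t)"])
      (use 1 bounded_linear.has_vector_derivative[OF assms(1)] in auto)
qed

lemma jet_add:
  assumes "jet2 \<phi> a0 a1 a2" "jet2 \<psi> b0 b1 b2"
  shows "jet2 (\<lambda>t. \<phi> t + \<psi> t) (a0 + b0) (a1 + b1) (a2 + b2)"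
proof -
  obtain d1 \<phi>' where 1: "d1 > 0" "\<forall>t. \<bar>t\<bar> < d1 \<longrightarrow> (\<phi> has_vector_derivative \<phi>' t) (at t)"
    "\<phi> 0 = a0" "\<phi>' 0 = a1" "(\<phi>' has_vector_derivative a2) (at 0)"
    using assms(1) unfolding jet2_def by blast
  obtain d2 \<psi>' where 2: "d2 > 0" "\<forall>t. \<bar>t\<bar> < d2 \<longrightarrow> (\<psi> has_vector_derivative \<psi>' t) (at t)"
    "\<psi> 0 = b0" "\<psi>' 0 = b1" "(\<psi>' has_vector_derivative b2) (at 0)"
    using assms(2) unfolding jet2_def by blast
  show ?thesis unfolding jet2_def
    by (rule exI[of _ "min d1 d2"], rule conjI, use 1 2 in simp, rule exI[of _ "\<lambda>t. \<phi>' t + \<psi>' t"])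
      (use 1 2 in \<open>auto intro!: derivative_intros\<close>)
qed

lemma jet_diff:
  assumes "jet2 \<phi> a0 a1 a2" "jet2 \<psi> b0 b1 b2"
  shows "jet2 (\<lambda>t. \<phi> t - \<psi> t) (a0 - b0) (a1 - b1) (a2 - b2)"
proof -
  obtain d1 \<phi>' where 1: "d1 > 0" "\<forall>t. \<bar>t\<bar> < d1 \<longrightarrow> (\<phi> has_vector_derivative \<phi>' t) (at t)"
    "\<phi> 0 = a0" "\<phi>' 0 = a1" "(\<phi>' has_vector_derivative a2) (at 0)"
    using assms(1) unfolding jet2_def by blast
  obtain d2 \<psi>' where 2: "d2 > 0" "\<forall>t. \<bar>t\<bar> < d2 \<longrightarrow> (\<psi> has_vector_derivative \<psi>' t) (at t)"
    "\<psi> 0 = b0" "\<psi>' 0 = b1" "(\<psi>' has_vector_derivative b2) (at 0)"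
    using assms(2) unfolding jet2_def by blast
  show ?thesis unfolding jet2_def
    by (rule exI[of _ "min d1 d2"], rule conjI, use 1 2 in simp, rule exI[of _ "\<lambda>t. \<phi>' t - \<psi>' t"])
      (use 1 2 in \<open>auto intro!: derivative_intros\<close>)
qed

lemma jet_zero:
  assumes J: "jet2 \<phi> c0 c1 c2" and Z: "d > 0" "\<And>t. \<bar>t\<bar> < d \<Longrightarrow> \<phi> t = 0"
  shows "c0 = 0 \<and> c1 = 0 \<and> c2 = 0"
proof -
  obtain d1 \<phi>' where 1: "d1 > 0" "\<forall>t. \<bar>t\<bar> < d1 \<longrightarrow> (\<phi> has_vector_derivative \<phi>' t) (at t)"
    "\<phi> 0 = c0" "\<phi>' 0 = c1" "(\<phi>' has_vector_derivative c2) (at 0)"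
    using J unfolding jet2_def by blast
  have z: "\<phi>' t = 0" if t: "\<bar>t\<bar> < min d d1" for t
  proof -
    have "((\<lambda>t. 0) has_vector_derivative 0) (at t)" by (rule has_vector_derivative_const)
    then have "(\<phi> has_vector_derivative 0) (at t)"
      by (rule has_vector_derivative_transform_within_open[where S="ball 0 (min d d1)"])
         (use t Z in \<open>auto simp: dist_norm\<close>)
    moreover have "(\<phi> has_vector_derivative \<phi>' t) (at t)" using 1(2) t by auto
    ultimately show ?thesis using vector_derivative_unique_at by metis
  qed
  have "((\<lambda>t. 0) has_vector_derivative 0) (at 0)" by (rule has_vector_derivative_const)
  then have "(\<phi>' has_vector_derivative 0) (at 0)"
    by (rule has_vector_derivative_transform_within_open[where S="ball 0 (min d d1)"])
       (use z Z 1 in \<open>auto simp: dist_norm\<close>)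
  then have "c2 = 0" using 1(5) vector_derivative_unique_at by metis
  moreover have "c1 = 0" using z[of 0] 1 Z by simp
  moreover have "c0 = 0" using Z(2)[of 0] Z(1) 1 by simp
  ultimately show ?thesis by simp
qed

lemma jet_mult:
  fixes \<phi> \<psi> :: "real \<Rightarrow> real"
  assumes "jet2 \<phi> a0 a1 a2" "jet2 \<psi> b0 b1 b2"
  shows "jet2 (\<lambda>t. \<phi> t * \<psi> t) (a0 * b0) (a1 * b0 + a0 * b1) (a2 * b0 + 2 * (a1 * b1) + a0 * b2)"
  using jet_bil[OF bounded_bilinear_mult assms] by simp

lemma jet_pmul:
  assumes "jet2 \<phi> a0 a1 a2" "jet2 \<psi> b0 b1 b2"
  shows "jet2 (\<lambda>t. pmul (\<phi> t) (\<psi> t)) (pmul a0 b0) (pmul a1 b0 + pmul a0 b1)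
    (pmul a2 b0 + 2 *\<^sub>R pmul a1 b1 + pmul a0 b2)"
  by (rule jet_bil[OF bl_pmul assms])

lemma jet_pconj: "jet2 \<phi> a b c \<Longrightarrow> jet2 (\<lambda>t. pconj (\<phi> t)) (pconj a) (pconj b) (pconj c)"
  by (rule jet_lin[OF bl_pconj])
lemma jet_pRe: "jet2 \<phi> a b c \<Longrightarrow> jet2 (\<lambda>t. pRe (\<phi> t)) (pRe a) (pRe b) (pRe c)"
  by (rule jet_lin[OF bl_pRe])
lemma jet_fst: "jet2 \<phi> a b c \<Longrightarrow> jet2 (\<lambda>t. fst (\<phi> t)) (fst a) (fst b) (fst c)"
  by (rule jet_lin[OF bounded_linear_fst])
lemma jet_snd: "jet2 \<phi> a b c \<Longrightarrow> jet2 (\<lambda>t. snd (\<phi> t)) (snd a) (snd b) (snd c)"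
  by (rule jet_lin[OF bounded_linear_snd])
lemma jet_line: "jet2 (\<lambda>t. t *\<^sub>R c) 0 c 0"
  using jet_bil[OF bounded_bilinear_scaleR jet_id jet_const[of c]] by simp

lemmas jet_rules = jet_add jet_diff jet_mult jet_pmul jet_pconj jet_pRe jet_fst jet_snd jet_line jet_const

definition nmf :: "poct \<times> poct \<Rightarrow> poct \<times> poct \<Rightarrow> real" where
  "nmf p X = psq (fst X) * (1 + psq (snd p)) + psq (snd X) * (1 + psq (fst p)) - 2 * M4 (fst p) (snd p) (snd X) (fst X)"
definition dnf :: "poct \<times> poct \<Rightarrow> real" where
  "dnf p = 1 + psq (fst p) + psq (snd p)"

lemma pinner_sym_raw: "pRe (pmul a (pconj b)) = pRe (pmul b (pconj a))"
proof -
  obtain a1 a2 a3 a4 a5 a6 a7 a8 where a: "a = ((a1,a2,a3,a4),(a5,a6,a7,a8))" by (metis prod.exhaust)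
  obtain b1 b2 b3 b4 b5 b6 b7 b8 where b: "b = ((b1,b2,b3,b4),(b5,b6,b7,b8))" by (metis prod.exhaust)
  show ?thesis unfolding a b by (simp add: pRe_def algebra_simps)
qed

lemma pinner_commute: "pinner a b = pinner b a"
  unfolding pinner_def by (rule pinner_sym_raw)

definition g0 :: "poct \<times> poct \<Rightarrow> poct \<times> poct \<Rightarrow> real" where
  "g0 X Y = pinner (fst X) (fst Y) + pinner (snd X) (snd Y)"
definition P0 :: "poct \<times> poct \<Rightarrow> real" where
  "P0 X = psq (fst X) + psq (snd X)"

lemma jet_Lambda:
  assumes Jy: "jet2 y 0 Y1 Y2" and JX: "jet2 X X0 X1 X2"
  shows "jet2 (\<lambda>t. nmf (y t) (X t) * (dnf (t *\<^sub>R h) * dnf (t *\<^sub>R h)) - nmf (t *\<^sub>R h) a * (dnf (y t) * dnf (y t)))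
    (P0 X0 - P0 a) (2 * g0 X0 X1)
    (2 * g0 X0 X2 + 2 * P0 X1 + 2 * P2 Y1 X0 + 4 * P0 X0 * P0 h - 2 * P2 h a - 4 * P0 a * P0 Y1)"
  unfolding nmf_def dnf_def psq_def pinner_def M4_def
  apply (rule jet_eq)
  apply (rule jet_rules Jy JX)+
  apply (simp_all add: bounded_bilinear.zero_left[OF bl_pmul] bounded_bilinear.zero_right[OF bl_pmul]
     linear_0[OF bounded_linear.linear[OF bl_pRe]] linear_0[OF bounded_linear.linear[OF bl_pconj]])
  apply (simp_all only: pRe_add pRe_scale pmul_add1 pmul_add2
     pmul_scale1 pmul_scale2 pconj_add pconj_scale pinner_def[symmetric] M4_def[symmetric])
  apply (simp_all add: P0_def g0_def P2_def psq_def pinner_commute)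
  apply (simp_all add: algebra_simps)
  done




lemma dirderiv_cong:
  fixes gA gB :: "'a::real_normed_vector \<Rightarrow> 'b::real_normed_vector"
  assumes S: "open S" "x \<in> S" and eq: "\<And>y. y \<in> S \<Longrightarrow> gA y = gB y"
    and d: "(\<lambda>t. gA (x + t *\<^sub>R a)) differentiable (at 0)"
  shows "dirderiv gA x a = dirderiv gB x a"
proof -
  obtain r where r: "r > 0" "ball x r \<subseteq> S" using S open_contains_ball by blast
  have 1: "((\<lambda>t. gA (x + t *\<^sub>R a)) has_vector_derivative dirderiv gA x a) (at 0)"
    using d unfolding dirderiv_def vector_derivative_works .
  have "((\<lambda>t. gB (x + t *\<^sub>R a)) has_vector_derivative dirderiv gA x a) (at 0)"
  proof (rule has_vector_derivative_transform_within[OF 1, where d="r / (norm a + 1)"])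
    show "0 < r / (norm a + 1)" using r by (simp add: add_nonneg_pos)
    show "(0::real) \<in> UNIV" by simp
    fix t :: real assume "t \<in> UNIV" "dist t 0 < r / (norm a + 1)"
    then have "\<bar>t\<bar> * (norm a + 1) < r" by (simp add: pos_less_divide_eq add_nonneg_pos)
    then have "norm (t *\<^sub>R a) < r" by (smt (verit) mult_left_mono abs_ge_zero norm_scaleR)
    then have "x + t *\<^sub>R a \<in> S" using r by (auto simp: dist_norm)
    then show "gA (x + t *\<^sub>R a) = gB (x + t *\<^sub>R a)" by (rule eq)
  qed
  then show ?thesis unfolding dirderiv_def by (simp add: vector_derivative_at)
qed

locale smoothS =
  fixes S :: "(poct \<times> poct) set" and f :: "poct \<times> poct \<Rightarrow> poct \<times> poct"
  assumes sm: "smooth_on S f"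
begin

lemma op: "open S" using sm unfolding smooth_on_def by blast
lemma cont: "continuous_on S (iter_dd f hs)" using sm unfolding smooth_on_def by blast
lemma diff: "x \<in> S \<Longrightarrow> (\<lambda>t. iter_dd f hs (x + t *\<^sub>R h)) differentiable (at 0)"
  using sm unfolding smooth_on_def by blast

lemma fd: "x \<in> S \<Longrightarrow> (iter_dd f hs has_derivative (\<lambda>h. iter_dd f (h # hs) x)) (at x)"
  using dd_frechet[where g="iter_dd f hs" and S=S and x=x, OF op _ diff] cont[of "_ # hs"] by simp

lemma lin: "x \<in> S \<Longrightarrow> linear (\<lambda>h. iter_dd f (h # hs) x)"
  using fd has_derivative_linear by blast

lemma swap1: "x \<in> S \<Longrightarrow> iter_dd f (k # h # hs) x = iter_dd f (h # k # hs) x"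
  using schwarz[where g="iter_dd f hs" and S=S and x=x and h=h and k=k, OF op _ diff]
    diff[of _ "h # hs"] diff[of _ "k # hs"] cont[of "k # h # hs"] cont[of "h # k # hs"] by simp

lemma swap2: "x \<in> S \<Longrightarrow> iter_dd f (a # k # h # hs) x = iter_dd f (a # h # k # hs) x"
  using dirderiv_cong[where gA="iter_dd f (k # h # hs)" and gB="iter_dd f (h # k # hs)" and S=S and x=x and a=a,
    OF op _ swap1] diff[of x "k # h # hs" a] by simp

lemma jet: assumes "0 \<in> S"
  shows "jet2 (\<lambda>t. iter_dd f hs (t *\<^sub>R h)) (iter_dd f hs 0) (iter_dd f (h # hs) 0) (iter_dd f (h # h # hs) 0)"
proof -
  obtain r where r: "r > 0" "ball 0 r \<subseteq> S" using op assms open_contains_ball by blast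
  define d where "d = r / (norm h + 1)"
  have dpos: "d > 0" using r by (simp add: d_def add_nonneg_pos)
  have inS: "t *\<^sub>R h \<in> S" if "\<bar>t\<bar> < d" for t
  proof -
    have "\<bar>t\<bar> * (norm h + 1) < r" using that by (simp add: d_def pos_less_divide_eq add_nonneg_pos)
    then have "norm (t *\<^sub>R h) < r" by (smt (verit) mult_left_mono abs_ge_zero norm_scaleR)
    then show ?thesis using r by (auto simp: dist_norm)
  qed
  have D: "((\<lambda>t. iter_dd f ks (0 + t *\<^sub>R h)) has_vector_derivative iter_dd f (h # ks) (0 + t *\<^sub>R h)) (at t)"
    if "\<bar>t\<bar> < d" for t ks
    using dd_line[of "iter_dd f ks" 0 t h] diff[OF inS[OF that], of ks h] by simp
  show ?thesis unfolding jet2_def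
    by (rule exI[of _ d], rule conjI[OF dpos], rule exI[of _ "\<lambda>t. iter_dd f (h # hs) (t *\<^sub>R h)"])
       (use D[of _ hs] D[of 0 "h # hs"] dpos in simp)
qed

end




lemma scancel:
  fixes G :: "'a::real_vector \<Rightarrow> 'a \<Rightarrow> real" and D :: "'a \<Rightarrow> 'a" and T :: "'a \<Rightarrow> 'a \<Rightarrow> 'a \<Rightarrow> 'a"
  assumes G1: "\<And>p q r. G (p + q) r = G p r + G q r" "\<And>p q r. G (p - q) r = G p r - G q r"
    and G2: "\<And>p q r. G r (p + q) = G r p + G r q" "\<And>p q r. G r (p - q) = G r p - G r q"
    and Dl: "\<And>p q. D (p + q) = D p + D q" "\<And>p q. D (p - q) = D p - D q"
    and T1: "\<And>p q k a. T (p + q) k a = T p k a + T q k a" "\<And>p q k a. T (p - q) k a = T p k a - T q k a"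
    and T2: "\<And>p q h a. T h (p + q) a = T h p a + T h q a" "\<And>p q h a. T h (p - q) a = T h p a - T h q a"
    and T3: "\<And>p q h k. T h k (p + q) = T h k p + T h k q" "\<And>p q h k. T h k (p - q) = T h k p - T h k q"
    and S12: "\<And>h k a. T h k a = T k h a" and S23: "\<And>h k a. T h k a = T h a k"
  shows "G (D v) (T x x v) + G (D x) (T v v x)
     - (G (D (x+v)) (T (x+v) (x+v) (x+v)) - G (D (x-v)) (T (x+v) (x+v) (x-v))
        - G (D (x+v)) (T (x-v) (x-v) (x+v)) + G (D (x-v)) (T (x-v) (x-v) (x-v))) / 8 = 0"
proof -
  have s: "T v x x = T x x v" "T x v x = T x x v" "T v x v = T x v v" "T v v x = T x v v"
    by (metis S12 S23)+
  show ?thesis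
    by (simp only: G1 G2 Dl T1 T2 T3 s) (simp add: algebra_simps)
qed




lemma pinner_add1: "pinner (a + b) c = pinner a c + pinner b c"
  by (simp add: pinner_def pmul_add1 pRe_add)
lemma pinner_scale1: "pinner (r *\<^sub>R a) c = r * pinner a c"
  by (simp add: pinner_def pmul_scale1 pRe_scale)

lemma bl_pinner: "bounded_bilinear pinner"
proof -
  have l1: "linear (\<lambda>a. pinner a c)" for c
    by (intro linearI) (simp_all add: pinner_add1 pinner_scale1)
  have "bilinear pinner"
    unfolding bilinear_def
  proof (intro conjI allI)
    fix x show "linear (pinner x)"
      by (intro linearI) (simp_all add: pinner_commute[of x] pinner_add1 pinner_scale1)
    fix y show "linear (\<lambda>x. pinner x y)" by (rule l1)
  qed
  then show ?thesis by (simp add: bilinear_conv_bounded_bilinear)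
qed

lemma bl_g0: "bounded_bilinear g0"
proof -
  interpret p: bounded_bilinear pinner by (rule bl_pinner)
  have "bilinear g0"
    unfolding bilinear_def g0_def
    by (intro conjI allI linearI) (simp_all add: p.add_left p.add_right p.scaleR_left p.scaleR_right algebra_simps)
  then show ?thesis by (simp add: bilinear_conv_bounded_bilinear)
qed

lemma P0_g0: "P0 X = g0 X X" by (simp add: P0_def g0_def psq_def)
lemma g0_commute: "g0 X Y = g0 Y X" by (simp add: g0_def pinner_commute)

definition Jp :: "poct \<times> poct \<Rightarrow> poct \<times> poct" where
  "Jp X = ((fst (fst X), - snd (fst X)), (fst (snd X), - snd (snd X)))"

lemma g0_Jp: "g0 X (Jp X) = inner X X"
proof -
  obtain a1 a2 a3 a4 a5 a6 a7 a8 b1 b2 b3 b4 b5 b6 b7 b8 where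
    X: "X = (((a1,a2,a3,a4),(a5,a6,a7,a8)),((b1,b2,b3,b4),(b5,b6,b7,b8)))" by (metis prod.exhaust)
  show ?thesis unfolding X by (simp add: g0_def pinner_def pRe_def Jp_def inner_prod_def algebra_simps)
qed

lemma g0_nondeg: "(\<And>Y. g0 X Y = 0) \<Longrightarrow> X = 0"
  using g0_Jp[of X] by simp

lemma chart_dom_iff: "x \<in> chart_dom \<longleftrightarrow> 0 < dnf x"
  by (cases x) (simp add: chart_dom_def dnf_def)

lemma metric_q_alt: "metric_q p X = nmf p X / (dnf p)^2"
proof -
  have "metric_q p X = metric_q (fst p, snd p) (fst X, snd X)" by simp
  also have "\<dots> = nmf p X / (dnf p)^2"
    by (simp only: metric_q.simps) (simp add: nmf_def dnf_def M4_def)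
  finally show ?thesis .
qed

lemma psq_scale: "psq (c *\<^sub>R x) = c^2 * psq x"
  by (simp add: psq_def pinner_def pmul_scale1 pmul_scale2 pconj_scale pRe_scale power2_eq_square)

lemma M4_scale34: "M4 u v (c *\<^sub>R e) (c *\<^sub>R x) = c^2 * M4 u v e x"
  by (simp add: M4_def pmul_scale1 pmul_scale2 pconj_scale pRe_scale power2_eq_square)

lemma nmf_scale: "nmf p (c *\<^sub>R X) = c^2 * nmf p X"
  by (simp add: nmf_def psq_scale M4_scale34 algebra_simps)

lemma metric_g_diag: "metric_g p a a = metric_q p a"
proof -
  have "metric_q p (a + a) = 4 * metric_q p a"
    using nmf_scale[of p 2 a] by (simp add: metric_q_alt scaleR_2)
  moreover have "metric_q p (a - a) = 0"
    using nmf_scale[of p 0 a] by (simp add: metric_q_alt)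
  ultimately show ?thesis by (simp add: metric_g_def)
qed

lemma line_in:
  fixes h :: "'a::real_normed_vector"
  assumes "open S" "0 \<in> S"
  shows "\<exists>d>0. \<forall>t. \<bar>t\<bar> < d \<longrightarrow> t *\<^sub>R h \<in> S"
proof -
  obtain r where r: "r > 0" "ball 0 r \<subseteq> S" using assms open_contains_ball by blast
  define d where "d = r / (norm h + 1)"
  have dpos: "d > 0" using r by (simp add: d_def add_nonneg_pos)
  have "t *\<^sub>R h \<in> S" if "\<bar>t\<bar> < d" for t
  proof -
    have "\<bar>t\<bar> * (norm h + 1) < r" using that by (simp add: d_def pos_less_divide_eq add_nonneg_pos)
    then have "norm (t *\<^sub>R h) < r" by (smt (verit) mult_left_mono abs_ge_zero norm_scaleR)
    then show ?thesis using r by (auto simp: dist_norm)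
  qed
  then show ?thesis using dpos by blast
qed

lemma main_contra:
  assumes iso: "local_isometry_fixing S f 0" and Dv: "frechet_derivative f (at 0) vv = wv"
  shows False
proof -
  have op: "open S" and S0: "0 \<in> S" and Sdom: "S \<subseteq> chart_dom" and fSdom: "f ` S \<subseteq> chart_dom"
    and sm: "smooth_on S f" and f0: "f 0 = 0"
    and isom: "\<And>x a b. x \<in> S \<Longrightarrow> metric_g (f x) (frechet_derivative f (at x) a) (frechet_derivative f (at x) b) = metric_g x a b"
    using iso unfolding local_isometry_fixing_def by auto
  interpret smoothS S f by unfold_locales (rule sm)
  have fder: "frechet_derivative f (at x) = (\<lambda>h. iter_dd f [h] x)" if "x \<in> S" for x
    using frechet_derivative_at[OF fd[OF that, of "[]"]] by simp
  define D where "D = (\<lambda>a. iter_dd f [a] 0)"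
  define B where "B = (\<lambda>h a. iter_dd f [h, a] 0)"
  define T where "T = (\<lambda>h k a. iter_dd f [h, k, a] 0)"
  have E: "P0 (D a) - P0 a = 0 \<and> 2 * g0 (D a) (B h a) = 0 \<and>
    2 * g0 (D a) (T h h a) + 2 * P0 (B h a) + 2 * P2 (D h) (D a) + 4 * P0 (D a) * P0 h - 2 * P2 h a - 4 * P0 a * P0 (D h) = 0"
    for h a
  proof -
    have Jy: "jet2 (\<lambda>t. f (t *\<^sub>R h)) 0 (D h) (iter_dd f [h, h] 0)"
      using jet[OF S0, of "[]" h] f0 by (simp add: D_def)
    have JX: "jet2 (\<lambda>t. iter_dd f [a] (t *\<^sub>R h)) (D a) (B h a) (T h h a)"
      using jet[OF S0, of "[a]" h] by (simp add: D_def B_def T_def)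
    obtain d where d: "d > 0" "\<forall>t. \<bar>t\<bar> < d \<longrightarrow> t *\<^sub>R h \<in> S" using line_in[OF op S0] by blast
    have Z: "nmf (f (t *\<^sub>R h)) (iter_dd f [a] (t *\<^sub>R h)) * (dnf (t *\<^sub>R h) * dnf (t *\<^sub>R h))
        - nmf (t *\<^sub>R h) a * (dnf (f (t *\<^sub>R h)) * dnf (f (t *\<^sub>R h))) = 0" if "\<bar>t\<bar> < d" for t
    proof -
      let ?x = "t *\<^sub>R h"
      have xS: "?x \<in> S" using d that by blast
      have "metric_g (f ?x) (iter_dd f [a] ?x) (iter_dd f [a] ?x) = metric_g ?x a a"
        using isom[OF xS, of a a] fder[OF xS] by simp
      then have eq: "nmf (f ?x) (iter_dd f [a] ?x) / (dnf (f ?x))^2 = nmf ?x a / (dnf ?x)^2"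
        by (simp add: metric_g_diag metric_q_alt)
      have p1: "dnf ?x > 0" using Sdom xS chart_dom_iff by blast
      have p2: "dnf (f ?x) > 0" using fSdom xS chart_dom_iff by blast
      from eq p1 p2 show ?thesis by (simp add: field_simps power2_eq_square)
    qed
    from jet_zero[OF jet_Lambda[OF Jy JX, of h a] d(1) Z] show ?thesis .
  qed
  have Dlin: "linear D" unfolding D_def using lin[OF S0, of "[]"] by simp
  have Blin: "linear (\<lambda>h. B h a)" for a unfolding B_def using lin[OF S0, of "[a]"] by simp
  have Bsym: "B h a = B a h" for h a unfolding B_def using swap1[OF S0, of h a "[]"] by simp
  have Tlin: "linear (\<lambda>h. T h k a)" for k a unfolding T_def using lin[OF S0, of "[k, a]"] by simp
  have S12: "T h k a = T k h a" for h k a unfolding T_def using swap1[OF S0, of h k "[a]"] by simp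
  have S23: "T h k a = T h a k" for h k a unfolding T_def using swap2[OF S0, of h k a "[]"] by simp
  interpret G: bounded_bilinear g0 by (rule bl_g0)
  have Dadd: "D (p + q) = D p + D q" "D (p - q) = D p - D q" for p q
    using linear_add[OF Dlin] linear_diff[OF Dlin] by auto
  have T1: "T (p + q) k a = T p k a + T q k a" "T (p - q) k a = T p k a - T q k a" for p q k a
    using linear_add[OF Tlin] linear_diff[OF Tlin] by auto
  have T2: "T h (p + q) a = T h p a + T h q a" "T h (p - q) a = T h p a - T h q a" for p q h a
    using T1 S12 by metis+
  have T3: "T h k (p + q) = T h k p + T h k q" "T h k (p - q) = T h k p - T h k q" for p q h k
    using T2 S23 by metis+
  have Badd2: "B h (p + q) = B h p + B h q" for h p q
    using linear_add[OF Blin] Bsym by metis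
  have P0D: "P0 (D a) = P0 a" for a using E[of a a] by simp
  have isoD: "g0 (D a) (D b) = g0 a b" for a b
  proof -
    have "P0 (D (a + b)) = P0 (a + b)" by (rule P0D)
    then have "g0 (D a) (D a) + 2 * g0 (D a) (D b) + g0 (D b) (D b) = g0 a a + 2 * g0 a b + g0 b b"
      by (simp add: P0_g0 Dadd G.add_left G.add_right g0_commute[of "D b" "D a"] g0_commute[of b a])
    then show ?thesis using P0D[of a] P0D[of b] by (simp add: P0_g0)
  qed
  have Dinj: "inj D"
  proof (rule injI)
    fix a b assume "D a = D b"
    then have "D (a - b) = 0" by (simp add: Dadd)
    then have "g0 (a - b) c = 0" for c using isoD[of "a - b" c] by (simp add: G.zero_left)
    then have "a - b = 0" by (rule g0_nondeg)
    then show "a = b" by simp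
  qed
  have Dsurj: "surj D" using linear_injective_imp_surjective[OF Dlin Dinj] by simp
  have E1: "g0 (D a) (B h a) = 0" for h a using E[where h=h and a=a] by simp
  define \<tau> where "\<tau> = (\<lambda>h a b. g0 (B h a) (D b))"
  have pol: "\<tau> h a b + \<tau> h b a = 0" for h a b
  proof -
    have "g0 (D (a + b)) (B h (a + b)) = 0" by (rule E1)
    then show ?thesis
      using E1[of a h] E1[of b h]
      by (simp add: \<tau>_def Dadd Badd2 G.add_left G.add_right g0_commute[of "B h a"] g0_commute[of "B h b"])
  qed
  have tsym: "\<tau> h a b = \<tau> a h b" for h a b by (simp add: \<tau>_def Bsym)
  have tau0: "\<tau> h a b = 0" for h a b
  proof -
    have "\<tau> h a b = - \<tau> h b a" using pol[of h a b] by simp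
    also have "\<dots> = - \<tau> b h a" using tsym by simp
    also have "\<dots> = \<tau> b a h" using pol[of b h a] by simp
    also have "\<dots> = \<tau> a b h" using tsym by simp
    also have "\<dots> = - \<tau> a h b" using pol[of a b h] by simp
    also have "\<dots> = - \<tau> h a b" using tsym by simp
    finally show ?thesis by simp
  qed
  have P0B: "P0 (B h a) = 0" for h a
  proof -
    obtain c where c: "B h a = D c" using Dsurj by (metis surjD)
    have "P0 (B h a) = g0 (B h a) (D c)" by (simp add: P0_g0 c)
    also have "\<dots> = 0" using tau0 by (simp add: \<tau>_def)
    finally show ?thesis .
  qed
  define \<sigma> where "\<sigma> = (\<lambda>h a. g0 (D a) (T h h a))"
  have E2: "P2 (D h) (D a) = P2 h a - \<sigma> h a" for h a
    using E[where h=h and a=a] P0D[of a] P0D[of h] P0B[of h a] by (simp add: \<sigma>_def algebra_simps)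
  have canc: "\<sigma> x v + \<sigma> v x - (\<sigma> (x+v) (x+v) - \<sigma> (x+v) (x-v) - \<sigma> (x-v) (x+v) + \<sigma> (x-v) (x-v)) / 8 = 0" for x v
    unfolding \<sigma>_def
    by (rule scancel[where G=g0 and D=D and T=T])
       (simp_all add: G.add_left G.add_right G.diff_left G.diff_right Dadd T1 T2 T3 S12[of _ _] S23)
  have KD: "Kc (D x) (D v) = Kc x v" for x v
  proof -
    have "Kc (D x) (D v) = P2 (D x) (D v) + P2 (D v) (D x) - (P2 (D (x+v)) (D (x+v)) - P2 (D (x+v)) (D (x-v))
        - P2 (D (x-v)) (D (x+v)) + P2 (D (x-v)) (D (x-v))) / 8"
      by (simp add: Kc_def Dadd)
    also have "\<dots> = Kc x v - (\<sigma> x v + \<sigma> v x - (\<sigma> (x+v) (x+v) - \<sigma> (x+v) (x-v) - \<sigma> (x-v) (x+v) + \<sigma> (x-v) (x-v)) / 8)"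
      unfolding E2 Kc_def by (simp add: field_simps)
    finally show ?thesis using canc[of x v] by simp
  qed
  have "D vv = wv" using Dv fder[OF S0] by (simp add: D_def)
  then have "Kc (D xx) wv = Kc xx vv" using KD[of xx vv] by simp
  then show False using Kc_w Kc_x_v by simp
qed


theorem theorem9p5:
  shows "\<exists>P v w. P \<in> chart_dom \<and> v \<noteq> 0 \<and> w \<noteq> 0 \<and> metric_g P v v = metric_g P w w \<and>
           \<not> (\<exists>S f. local_isometry_fixing S f P \<and> frechet_derivative f (at P) v = w)"
proof (rule exI[of _ 0], rule exI[of _ vv], rule exI[of _ wv], intro conjI)
  show "(0::poct \<times> poct) \<in> chart_dom" by (simp add: chart_dom_iff dnf_def psq_zero)
  show "vv \<noteq> 0" by (simp add: vv_def zero_prod_def)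
  show "wv \<noteq> 0" by (simp add: wv_def uu_def zero_prod_def)
  show "metric_g 0 vv vv = metric_g 0 wv wv"
    by (simp add: metric_g_diag metric_q_alt nmf_def dnf_def vv_def wv_def uu_def psq_def pinner_def
        M4_def pRe_def zero_prod_def)
  show "\<not> (\<exists>S f. local_isometry_fixing S f 0 \<and> frechet_derivative f (at 0) vv = wv)"
    using main_contra by blast
qed

end
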